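(* Let $N\ge1$ and let $\lambda,\mu$ be complex parameters. Consider fields $x,\widetilde{x},\widehat{x},\widehat{\widetilde{x}}\in\mathbb{C}^N$ with indices taken modulo $N$. Suppose that $x,\widetilde{x},\widehat{x}$ satisfy, for all $k$, $$(E)\quad \frac{\sinh(\widetilde{x}_k-x_k+\lambda)}{\sinh(\widetilde{x}_k-x_k-\lambda)}\cdot\frac{\sinh(x_k-\widetilde{x}_{k-1}+\lambda)}{\sinh(x_k-\widetilde{x}_{k-1}-\lambda)}=\frac{\sinh(\widehat{x}_k-x_k+\mu)}{\sinh(\widehat{x}_k-x_k-\mu)}\cdot\frac{\sinh(x_k-\widehat{x}_{k-1}+\mu)}{\sinh(x_k-\widehat{x}_{k-1}-\mu)}.$$ Consider the superposition formulas $$(S1)\quad (e^{4\lambda}-e^{4\mu})\big(e^{2\widehat{x}_k}e^{2\widetilde{x}_k}+e^{2x_{k+1}}e^{2\widehat{\widetilde{x}}_k}\big)+e^{2\mu}(1-e^{4\lambda})\big(e^{2\widehat{x}_k}e^{2\widehat{\widetilde{x}}_k}+e^{2x_{k+1}}e^{2\widetilde{x}_k}\big)+e^{2\lambda}(e^{4\mu}-1)\big(e^{2\widetilde{x}_k}e^{2\widehat{\widetilde{x}}_k}+e^{2x_{k+1}}e^{2\widehat{x}_k}\big)=0,$$ $$(S2)\quad (e^{4\lambda}-e^{4\mu})\big(e^{2\widehat{x}_{k+1}}e^{2\widetilde{x}_{k+1}}+e^{2x_{k+1}}e^{2\widehat{\widetilde{x}}_k}\big)+e^{2\mu}(1-e^{4\lambda})\big(e^{2\widehat{x}_{k+1}}e^{2\widehat{\widetilde{x}}_k}+e^{2x_{k+1}}e^{2\widetilde{x}_{k+1}}\big)+e^{2\lambda}(e^{4\mu}-1)\big(e^{2\widetilde{x}_{k+1}}e^{2\widehat{\widetilde{x}}_k}+e^{2x_{k+1}}e^{2\widehat{x}_{k+1}}\big)=0.$$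 Then, by virtue of $(E)$, (S1) and (S2) are equivalent, and if $\widehat{\widetilde{x}}$ is defined by either of them, then for all $k$: $$(E_1)\quad \frac{\sinh(\widetilde{x}_k-x_k+\lambda)}{\sinh(\widetilde{x}_k-x_k-\lambda)}\cdot\frac{\sinh(x_{k+1}-\widetilde{x}_k+\lambda)}{\sinh(x_{k+1}-\widetilde{x}_k-\lambda)}=\frac{\sinh(\widehat{\widetilde{x}}_k-\widetilde{x}_k+\mu)}{\sinh(\widehat{\widetilde{x}}_k-\widetilde{x}_k-\mu)}\cdot\frac{\sinh(\widetilde{x}_k-\widehat{\widetilde{x}}_{k-1}+\mu)}{\sinh(\widetilde{x}_k-\widehat{\widetilde{x}}_{k-1}-\mu)},$$ $$(E_2)\quad \frac{\sinh(\widehat{x}_k-x_k+\mu)}{\sinh(\widehat{x}_k-x_k-\mu)}\cdot\frac{\sinh(x_{k+1}-\widehat{x}_k+\mu)}{\sinh(x_{k+1}-\widehat{x}_k-\mu)}=\frac{\sinh(\widehat{\widetilde{x}}_k-\widehat{x}_k+\lambda)}{\sinh(\widehat{\widetilde{x}}_k-\widehat{x}_k-\lambda)}\cdot\frac{\sinh(\widehat{x}_k-\widehat{\widetilde{x}}_{k-1}+\lambda)}{\sinh(\widehat{x}_k-\widehat{\widetilde{x}}_{k-1}-\lambda)},$$ $$(E_{12})\quad \frac{\sinh(\widehat{\widetilde{x}}_k-\widehat{x}_k+\lambda)}{\sinh(\widehat{\widetilde{x}}_k-\widehat{x}_k-\lambda)}\cdot\frac{\sinh(\widehat{x}_{k+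1}-\widehat{\widetilde{x}}_k+\lambda)}{\sinh(\widehat{x}_{k+1}-\widehat{\widetilde{x}}_k-\lambda)}=\frac{\sinh(\widehat{\widetilde{x}}_k-\widetilde{x}_k+\mu)}{\sinh(\widehat{\widetilde{x}}_k-\widetilde{x}_k-\mu)}\cdot\frac{\sinh(\widetilde{x}_{k+1}-\widehat{\widetilde{x}}_k+\mu)}{\sinh(\widetilde{x}_{k+1}-\widehat{\widetilde{x}}_k-\mu)}.$$
   Context: These are the corner equations for two Bäcklund transformations $F_\lambda,F_\mu$ of the periodic symmetric hyperbolic multiplicative Toda-type system $\ddot x_k=-(\dot x_k^2-1)\big(\coth(x_{k+1}-x_k)-\coth(x_k-x_{k-1})\big)$, where $F_\lambda:(x,p)\mapsto(\widetilde x,\widetilde p)$ is $e^{2p_k}=\frac{\sinh(\widetilde x_k-x_k+\lambda)}{\sinh(\widetilde x_k-x_k-\lambda)}\cdot\frac{\sinh(x_k-\widetilde x_{k-1}+\lambda)}{\sinh(x_k-\widetilde x_{k-1}-\lambda)}$, $e^{2\widetilde p_k}=\frac{\sinh(\widetilde x_k-x_k+\lambda)}{\sinh(\widetilde x_k-x_k-\lambda)}\cdot\frac{\sinh(x_{k+1}-\widetilde x_k+\lambda)}{\sinh(x_{k+1}-\widetilde x_k-\lambda)}$; hats denote the action of $F_\mu$. *)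

theory Defs
  imports Complex_Main
begin

definition nondeg :: "complex \<Rightarrow> complex \<Rightarrow> bool" where
  "nondeg a d \<longleftrightarrow> sinh (d + a) \<noteq> 0 \<and> sinh (d - a) \<noteq> 0"

end

theory Submission
  imports Defs
begin

definition rr :: "complex \<Rightarrow> complex \<Rightarrow> complex \<Rightarrow> complex" where
  "rr c P Q = (c*P - Q) / (P - c*Q)"
definition ndg :: "complex \<Rightarrow> complex \<Rightarrow> complex \<Rightarrow> bool" where
  "ndg c P Q \<longleftrightarrow> c*P - Q \<noteq> 0 \<and> P - c*Q \<noteq> 0"
definition SS :: "complex \<Rightarrow> complex \<Rightarrow> complex \<Rightarrow> complex \<Rightarrow> complex \<Rightarrow> complex \<Rightarrow> complex" where
 "SS a b X T H Z = (a^2 - b^2) * (H*T + X*Z) + b*(1-a^2)*(H*Z + X*T) + a*(b^2-1)*(T*Z+X*H)"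

lemma PT: "(a*X-T)*(Z-b*T)*(b*H-a*T)-(X-a*T)*(b*Z-T)*(a*H-b*T) = - T * SS a b X T H Z"
  unfolding SS_def by algebra
lemma PH: "(b*X-H)*(Z-a*H)*(a*T-b*H) - (X-b*H)*(a*Z-H)*(b*T-a*H) = H * SS a b X T H Z"
  unfolding SS_def by algebra
lemma PZ: "(a*H-Z)*(T-b*Z)*(b*X-a*Z)-(H-a*Z)*(b*T-Z)*(a*X-b*Z) = - Z * SS a b X T H Z"
  unfolding SS_def by algebra
lemma PE: "(b^2-a^2)*((a*Tp-X)*(a*X-T)*(Hp-b*X)*(X-b*H)-(Tp-a*X)*(X-a*T)*(b*Hp-X)*(b*X-(H::complex)))
  = X * (((a^2-b^2)*H*T + b*(1-a^2)*X*T + a*(b^2-1)*X*H) * ((a^2-b^2)*X + b*(1-a^2)*Hp + a*(b^2-1)*Tp)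
       - ((a^2-b^2)*Hp*Tp + b*(1-a^2)*X*Tp + a*(b^2-1)*X*Hp) * ((a^2-b^2)*X + b*(1-a^2)*H + a*(b^2-1)*T))"
  unfolding power2_eq_square by algebra
lemma SS_lin: "SS a b X T H Z = Z * ((a^2-b^2)*X + b*(1-a^2)*H + a*(b^2-1)*T) + ((a^2-b^2)*H*T + b*(1-a^2)*X*T + a*(b^2-1)*X*H)"
  unfolding SS_def by algebra

lemma fraceq:
  assumes "P - c*Q \<noteq> 0" "P' - c'*Q' \<noteq> 0" "R - d*S \<noteq> 0" "R' - d'*S' \<noteq> 0"
  shows "rr c P Q * rr c' P' Q' = rr d R S * rr d' R' S' \<longleftrightarrow>
    (c*P-Q)*(c'*P'-Q')*(R-d*S)*(R'-d'*S') = (d*R-S)*(d'*R'-S')*(P-c*Q)*(P'-c'*Q')"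
proof -
  have "rr c P Q * rr c' P' Q' = ((c*P-Q)*(c'*P'-Q')) / ((P-c*Q)*(P'-c'*Q'))"
    unfolding rr_def by simp
  moreover have "rr d R S * rr d' R' S' = ((d*R-S)*(d'*R'-S')) / ((R-d*S)*(R'-d'*S'))"
    unfolding rr_def by simp
  ultimately show ?thesis using assms by (simp add: frac_eq_eq mult_ac)
qed

lemma cross:
  fixes U1 V1 U2 V2 \<alpha> \<beta> :: complex
  assumes "U1*\<alpha> = V1*\<beta>" "U2*\<alpha> = V2*\<beta>" "\<not> (\<alpha> = 0 \<and> \<beta> = 0)"
  shows "U1*V2 = V1*U2"
proof -
  have "\<alpha> * (U1*V2 - V1*U2) = 0" using assms(1,2) by algebra
  moreover have "\<beta> * (U1*V2 - V1*U2) = 0" using assms(1,2) by algebra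
  ultimately show ?thesis using assms(3) by auto
qed

lemma notboth:
  fixes a b X H T :: complex
  assumes "(a^2-b^2)*X + b*(1-a^2)*H + a*(b^2-1)*T \<noteq> 0" "H \<noteq> 0"
  shows "\<not> (b*H-a*T = 0 \<and> a*H-b*T = 0)"
proof
  assume h: "b*H-a*T = 0 \<and> a*H-b*T = 0"
  have "H * ((a^2-b^2)*X + b*(1-a^2)*H + a*(b^2-1)*T) = 0" using h unfolding power2_eq_square by algebra
  thus False using assms by simp
qed

lemma legT:
  assumes "SS a b X1 T H Z1 = 0" "SS a b X0 T H Z0 = 0" "\<not> (b*H-a*T = 0 \<and> a*H-b*T = 0)"
  shows "(a*T-X0)*(a*X1-T)*(Z1-b*T)*(T-b*Z0) = (b*Z1-T)*(b*T-Z0)*(T-a*X0)*(X1-a*T)"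
proof -
  have 1: "((a*X1-T)*(Z1-b*T))*(b*H-a*T) = ((X1-a*T)*(b*Z1-T))*(a*H-b*T)"
    using PT[of a X1 T Z1 b H] assms(1) by (simp add: algebra_simps)
  have 2: "((a*X0-T)*(Z0-b*T))*(b*H-a*T) = ((X0-a*T)*(b*Z0-T))*(a*H-b*T)"
    using PT[of a X0 T Z0 b H] assms(2) by (simp add: algebra_simps)
  have "((a*X1-T)*(Z1-b*T))*((X0-a*T)*(b*Z0-T)) = ((X1-a*T)*(b*Z1-T))*((a*X0-T)*(Z0-b*T))"
    by (rule cross[OF 1 2 assms(3)])
  thus ?thesis by algebra
qed

lemma legH:
  assumes "SS a b X1 T H Z1 = 0" "SS a b X0 T H Z0 = 0" "\<not> (b*H-a*T = 0 \<and> a*H-b*T = 0)"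
  shows "(b*H-X0)*(b*X1-H)*(Z1-a*H)*(H-a*Z0) = (a*Z1-H)*(a*H-Z0)*(H-b*X0)*(X1-b*H)"
proof -
  have 1: "((b*X1-H)*(Z1-a*H))*(a*T-b*H) = ((X1-b*H)*(a*Z1-H))*(b*T-a*H)"
    using PH[of b X1 H Z1 a T] assms(1) by (simp add: algebra_simps)
  have 2: "((b*X0-H)*(Z0-a*H))*(a*T-b*H) = ((X0-b*H)*(a*Z0-H))*(b*T-a*H)"
    using PH[of b X0 H Z0 a T] assms(2) by (simp add: algebra_simps)
  have 3: "\<not> (a*T-b*H = 0 \<and> b*T-a*H = 0)" using assms(3) by (auto simp: algebra_simps)
  have "((b*X1-H)*(Z1-a*H))*((X0-b*H)*(a*Z0-H)) = ((X1-b*H)*(a*Z1-H))*((b*X0-H)*(Z0-a*H))"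
    by (rule cross[OF 1 2 3])
  thus ?thesis by algebra
qed

lemma legZ:
  assumes "SS a b X T H Z = 0" "SS a b X T1 H1 Z = 0" "Z \<noteq> 0" "b \<noteq> 0"
    and Ep: "(a*T1-X)*(a*X-T)*(H1-b*X)*(X-b*H) = (b*H1-X)*(b*X-H)*(T1-a*X)*(X-a*T)"
  shows "(a*Z-H)*(a*H1-Z)*(Z-b*T)*(T1-b*Z) = (b*Z-T)*(b*T1-Z)*(Z-a*H)*(H1-a*Z)"
proof (cases "b*X-a*Z = 0 \<and> a*X-b*Z = 0")
  case False
  have 1: "((a*H-Z)*(T-b*Z))*(b*X-a*Z) = ((H-a*Z)*(b*T-Z))*(a*X-b*Z)"
    using PZ[of a H Z T b X] assms(1) by (simp add: algebra_simps)
  have 2: "((a*H1-Z)*(T1-b*Z))*(b*X-a*Z) = ((H1-a*Z)*(b*T1-Z))*(a*X-b*Z)"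
    using PZ[of a H1 Z T1 b X] assms(2) by (simp add: algebra_simps)
  have "((a*H-Z)*(T-b*Z))*((H1-a*Z)*(b*T1-Z)) = ((H-a*Z)*(b*T-Z))*((a*H1-Z)*(T1-b*Z))"
    by (rule cross[OF 1 2 False])
  thus ?thesis by algebra
next
  case True
  have "Z * ((a-b)*(a+b)) = 0" using True by algebra
  hence "a = b \<or> a = -b" using assms(3) by (auto simp: add_eq_0_iff2)
  thus ?thesis
  proof
    assume ab: "a = b"
    hence XZ: "X = Z" using True assms(4) by auto
    show ?thesis using Ep unfolding ab XZ by algebra
  next
    assume ab: "a = -b"
    have "(X + Z) * b = 0" using True ab by algebra
    hence XZ: "X = -Z" using assms(4) by (simp add: add_eq_0_iff)
    show ?thesis using Ep unfolding ab XZ by algebra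
  qed
qed
lemma part1:
  fixes a b X1 T H T1 H1 Z :: complex
  assumes Ep: "(a*T1-X1)*(a*X1-T)*(H1-b*X1)*(X1-b*H) = (b*H1-X1)*(b*X1-H)*(T1-a*X1)*(X1-a*T)"
    and X1: "X1 \<noteq> 0"
    and D1: "(a^2-b^2)*X1 + b*(1-a^2)*H + a*(b^2-1)*T \<noteq> 0"
    and D2: "(a^2-b^2)*X1 + b*(1-a^2)*H1 + a*(b^2-1)*T1 \<noteq> 0"
  shows "SS a b X1 T H Z = 0 \<longleftrightarrow> SS a b X1 T1 H1 Z = 0"
proof -
  define D1' where "D1' = (a^2-b^2)*X1 + b*(1-a^2)*H + a*(b^2-1)*T"
  define D2' where "D2' = (a^2-b^2)*X1 + b*(1-a^2)*H1 + a*(b^2-1)*T1"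
  define N1 where "N1 = (a^2-b^2)*H*T + b*(1-a^2)*X1*T + a*(b^2-1)*X1*H"
  define N2 where "N2 = (a^2-b^2)*H1*T1 + b*(1-a^2)*X1*T1 + a*(b^2-1)*X1*H1"
  have "(a*T1-X1)*(a*X1-T)*(H1-b*X1)*(X1-b*H)-(T1-a*X1)*(X1-a*T)*(b*H1-X1)*(b*X1-H) = 0"
    using Ep by (simp add: mult_ac)
  hence "X1 * (N1 * D2' - N2 * D1') = 0"
    using PE[of b a T1 X1 T H1 H] unfolding N1_def N2_def D1'_def D2'_def by simp
  hence ND: "N1 * D2' = N2 * D1'" using X1 by simp
  have s1: "SS a b X1 T H Z = Z * D1' + N1" unfolding D1'_def N1_def by (rule SS_lin)
  have s2: "SS a b X1 T1 H1 Z = Z * D2' + N2" unfolding D2'_def N2_def by (rule SS_lin)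
  have d1: "D1' \<noteq> 0" "D2' \<noteq> 0" using D1 D2 unfolding D1'_def D2'_def by auto
  have "Z * D1' + N1 = 0 \<longleftrightarrow> (Z * D1' + N1) * D2' = 0" using d1 by simp
  also have "\<dots> \<longleftrightarrow> (Z * D2' + N2) * D1' = 0" using ND by (simp add: algebra_simps)
  also have "\<dots> \<longleftrightarrow> Z * D2' + N2 = 0" using d1 by simp
  finally show ?thesis unfolding s1 s2 .
qed

lemma core:
  fixes a b :: complex and X T H Z :: "int \<Rightarrow> complex"
  assumes nz: "a \<noteq> 0" "b \<noteq> 0" "\<And>k. X k \<noteq> 0" "\<And>k. T k \<noteq> 0" "\<And>k. H k \<noteq> 0" "\<And>k. Z k \<noteq> 0"
  and E: "\<And>k. rr a (T k) (X k) * rr a (X k) (T (k - 1)) = rr b (H k) (X k) * rr b (X k) (H (k - 1))"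
  and nd: "\<And>k. ndg a (T k) (X k) \<and> ndg a (X k) (T (k-1)) \<and> ndg b (H k) (X k) \<and> ndg b (X k) (H (k-1))
     \<and> ndg a (X (k+1)) (T k) \<and> ndg b (X(k+1)) (H k) \<and> ndg b (Z k) (T k) \<and> ndg b (T k) (Z (k-1))
     \<and> ndg a (Z k) (H k) \<and> ndg a (H k) (Z (k-1)) \<and> ndg a (H (k+1)) (Z k) \<and> ndg b (T (k+1)) (Z k)"
  and def1: "\<And>k. (a^2-b^2)*X(k+1) + b*(1-a^2)*H k + a*(b^2-1)*T k \<noteq> 0"
  and def2: "\<And>k. (a^2-b^2)*X(k+1) + b*(1-a^2)*H (k+1) + a*(b^2-1)*T (k+1) \<noteq> 0"
  shows "(\<forall>k. SS a b (X (k+1)) (T k) (H k) (Z k) = 0 \<longleftrightarrow> SS a b (X (k+1)) (T (k+1)) (H (k+1)) (Z k) = 0)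
   \<and> ((\<forall>k. SS a b (X (k+1)) (T k) (H k) (Z k) = 0) \<longrightarrow> (\<forall>k.
      rr a (T k) (X k) * rr a (X (k+1)) (T k) = rr b (Z k) (T k) * rr b (T k) (Z (k-1))
    \<and> rr b (H k) (X k) * rr b (X (k+1)) (H k) = rr a (Z k) (H k) * rr a (H k) (Z (k-1))
    \<and> rr a (Z k) (H k) * rr a (H (k+1)) (Z k) = rr b (Z k) (T k) * rr b (T (k+1)) (Z k)))"
proof -
  have Ek: "(a*T(k+1)-X(k+1))*(a*X(k+1)-T k)*(H(k+1)-b*X(k+1))*(X(k+1)-b*H k)
      = (b*H(k+1)-X(k+1))*(b*X(k+1)-H k)*(T(k+1)-a*X(k+1))*(X(k+1)-a*T k)" for k
  proof -
    have e: "rr a (T (k+1)) (X (k+1)) * rr a (X (k+1)) (T k) = rr b (H (k+1)) (X (k+1)) * rr b (X (k+1)) (H k)"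
      using E[of "k+1"] by simp
    have n1: "ndg a (T (k+1)) (X (k+1))" "ndg a (X (k+1)) (T k)" "ndg b (H (k+1)) (X (k+1))" "ndg b (X (k+1)) (H k)"
      using nd[of "k+1"] by auto
    show ?thesis using e fraceq[of "T (k+1)" a "X (k+1)" "X (k+1)" a "T k" "H (k+1)" b "X (k+1)" "X (k+1)" b "H k"]
      n1 unfolding ndg_def by simp
  qed
  have P1: "SS a b (X (k+1)) (T k) (H k) (Z k) = 0 \<longleftrightarrow> SS a b (X (k+1)) (T (k+1)) (H (k+1)) (Z k) = 0" for k
    by (rule part1[OF Ek nz(3) def1 def2])
  have P2: "rr a (T k) (X k) * rr a (X (k+1)) (T k) = rr b (Z k) (T k) * rr b (T k) (Z (k-1))
    \<and> rr b (H k) (X k) * rr b (X (k+1)) (H k) = rr a (Z k) (H k) * rr a (H k) (Z (k-1))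
    \<and> rr a (Z k) (H k) * rr a (H (k+1)) (Z k) = rr b (Z k) (T k) * rr b (T (k+1)) (Z k)"
    if S: "\<forall>k. SS a b (X (k+1)) (T k) (H k) (Z k) = 0" for k
  proof -
    have s1: "SS a b (X (k+1)) (T k) (H k) (Z k) = 0" using S by blast
    have s2: "SS a b (X (k+1)) (T (k+1)) (H (k+1)) (Z k) = 0" using S P1 by blast
    have s0': "SS a b (X (k-1+1)) (T (k-1+1)) (H (k-1+1)) (Z (k-1)) = 0" using S P1[of "k-1"] by blast
    hence s0: "SS a b (X k) (T k) (H k) (Z (k-1)) = 0" by simp
    have nb: "\<not> (b*H k-a*T k = 0 \<and> a*H k-b*T k = 0)"
      using notboth[OF def1[of k] nz(5)] .
    have nk: "ndg a (T k) (X k)" "ndg a (X (k+1)) (T k)" "ndg b (Z k) (T k)" "ndg b (T k) (Z (k-1))"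
      "ndg b (H k) (X k)" "ndg b (X (k+1)) (H k)" "ndg a (Z k) (H k)" "ndg a (H k) (Z (k-1))"
      "ndg a (H (k+1)) (Z k)" "ndg b (T (k+1)) (Z k)"
      using nd[of k] by auto
    have g1: "rr a (T k) (X k) * rr a (X (k+1)) (T k) = rr b (Z k) (T k) * rr b (T k) (Z (k-1))"
      using legT[OF s1 s0 nb] fraceq[of "T k" a "X k" "X (k+1)" a "T k" "Z k" b "T k" "T k" b "Z (k-1)"]
        nk unfolding ndg_def by simp
    have g2: "rr b (H k) (X k) * rr b (X (k+1)) (H k) = rr a (Z k) (H k) * rr a (H k) (Z (k-1))"
      using legH[OF s1 s0 nb] fraceq[of "H k" b "X k" "X (k+1)" b "H k" "Z k" a "H k" "H k" a "Z (k-1)"]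
        nk unfolding ndg_def by simp
    have g3: "rr a (Z k) (H k) * rr a (H (k+1)) (Z k) = rr b (Z k) (T k) * rr b (T (k+1)) (Z k)"
      using legZ[OF s1 s2 nz(6) nz(2) Ek[of k]] fraceq[of "Z k" a "H k" "H (k+1)" a "Z k" "Z k" b "T k" "T (k+1)" b "Z k"]
        nk unfolding ndg_def by simp
    show ?thesis using g1 g2 g3 by blast
  qed
  show ?thesis using P1 P2 by blast
qed

lemma sinh_c: "sinh (z::complex) = (exp z - exp (-z)) / 2"
  by (simp add: sinh_def scaleR_conv_of_real field_simps)
lemma e1: "exp (p - q + l) = exp(2*l)*exp(2*p) / exp (p+q+(l::complex))"
proof -
  have "exp(2*l)*exp(2*p) = exp (p - q + l) * exp (p+q+l)"
    by (simp only: exp_add[symmetric]) (simp add: algebra_simps)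
  thus ?thesis by simp
qed
lemma e2: "exp (-(p - q + l)) = exp(2*q) / exp (p+q+(l::complex))"
proof -
  have "exp(2*q) = exp (-(p - q + l)) * exp (p+q+l)"
    by (simp only: exp_add[symmetric]) (simp add: algebra_simps)
  thus ?thesis by simp
qed
lemma sp: "sinh (p - q + l) = (exp(2*l)*exp(2*p) - exp(2*q)) / (2*exp (p+q+(l::complex)))"
  unfolding sinh_c e1 e2 by (simp add: diff_divide_distrib mult.commute)
lemma sm: "sinh (p - q - l) = (exp(2*p) - exp(2*l)*exp(2*q)) / (2*exp (p+q+(l::complex)))"
proof -
  have "sinh (p - q - l) = - sinh ((q - p + l))" proof -
    have "p - q - l = -(q - p + l)" by simp
    thus ?thesis by (simp only: sinh_minus)
  qed 
  also have "\<dots> = - ((exp(2*l)*exp(2*q) - exp(2*p)) / (2*exp (q+p+l)))" by (simp only: sp)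
  also have "q+p+l = p+q+l" by simp
  finally show ?thesis by (simp add: minus_divide_left)
qed
lemma cancel: "c \<noteq> 0 \<Longrightarrow> (A/c)/(B/c) = A/(B::complex)"
  by (cases "B=0") (simp_all add: field_simps)
lemma sinh_ratio: "sinh (p - q + l) / sinh (p - q - l) = rr (exp(2*l)) (exp(2*p)) (exp(2*(q::complex)))"
  unfolding sp sm rr_def by (rule cancel) simp
theorem theorem16:
  fixes N :: nat and lam mu :: complex
    and x xt xh xht :: "int \<Rightarrow> complex"
  assumes N: "N \<ge> 1"
    and per: "\<And>k. x (k + int N) = x k" "\<And>k. xt (k + int N) = xt k"
             "\<And>k. xh (k + int N) = xh k" "\<And>k. xht (k + int N) = xht k"
    and E: "\<And>k. sinh (xt k - x k + lam) / sinh (xt k - x k - lam)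
                  * (sinh (x k - xt (k - 1) + lam) / sinh (x k - xt (k - 1) - lam))
               = sinh (xh k - x k + mu) / sinh (xh k - x k - mu)
                  * (sinh (x k - xh (k - 1) + mu) / sinh (x k - xh (k - 1) - mu))"
    and nd: "\<And>k. nondeg lam (xt k - x k) \<and> nondeg lam (x k - xt (k - 1))
              \<and> nondeg mu (xh k - x k) \<and> nondeg mu (x k - xh (k - 1))
              \<and> nondeg lam (x (k + 1) - xt k) \<and> nondeg mu (x (k + 1) - xh k)
              \<and> nondeg mu (xht k - xt k) \<and> nondeg mu (xt k - xht (k - 1))
              \<and> nondeg lam (xht k - xh k) \<and> nondeg lam (xh k - xht (k - 1))
              \<and> nondeg lam (xh (k + 1) - xht k) \<and> nondeg mu (xt (k + 1) - xht k)"
    and def1: "\<And>k. (exp (4*lam) - exp (4*mu)) * exp (2 * x (k + 1))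
                   + exp (2*mu) * (1 - exp (4*lam)) * exp (2 * xh k)
                   + exp (2*lam) * (exp (4*mu) - 1) * exp (2 * xt k) \<noteq> 0"
    and def2: "\<And>k. (exp (4*lam) - exp (4*mu)) * exp (2 * x (k + 1))
                   + exp (2*mu) * (1 - exp (4*lam)) * exp (2 * xh (k + 1))
                   + exp (2*lam) * (exp (4*mu) - 1) * exp (2 * xt (k + 1)) \<noteq> 0"
  defines "S1 \<equiv> \<lambda>k.
      (exp (4*lam) - exp (4*mu)) * (exp (2 * xh k) * exp (2 * xt k) + exp (2 * x (k + 1)) * exp (2 * xht k))
    + exp (2*mu) * (1 - exp (4*lam)) * (exp (2 * xh k) * exp (2 * xht k) + exp (2 * x (k + 1)) * exp (2 * xt k))
    + exp (2*lam) * (exp (4*mu) - 1) * (exp (2 * xt k) * exp (2 * xht k) + exp (2 * x (k + 1)) * exp (2 * xh k)) = 0"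
    and "S2 \<equiv> \<lambda>k.
      (exp (4*lam) - exp (4*mu)) * (exp (2 * xh (k + 1)) * exp (2 * xt (k + 1)) + exp (2 * x (k + 1)) * exp (2 * xht k))
    + exp (2*mu) * (1 - exp (4*lam)) * (exp (2 * xh (k + 1)) * exp (2 * xht k) + exp (2 * x (k + 1)) * exp (2 * xt (k + 1)))
    + exp (2*lam) * (exp (4*mu) - 1) * (exp (2 * xt (k + 1)) * exp (2 * xht k) + exp (2 * x (k + 1)) * exp (2 * xh (k + 1))) = 0"
  shows "(\<forall>k. S1 k \<longleftrightarrow> S2 k)
    \<and> ((\<forall>k. S1 k) \<longrightarrow> (\<forall>k.
         sinh (xt k - x k + lam) / sinh (xt k - x k - lam)
           * (sinh (x (k + 1) - xt k + lam) / sinh (x (k + 1) - xt k - lam))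
         = sinh (xht k - xt k + mu) / sinh (xht k - xt k - mu)
           * (sinh (xt k - xht (k - 1) + mu) / sinh (xt k - xht (k - 1) - mu))
       \<and> sinh (xh k - x k + mu) / sinh (xh k - x k - mu)
           * (sinh (x (k + 1) - xh k + mu) / sinh (x (k + 1) - xh k - mu))
         = sinh (xht k - xh k + lam) / sinh (xht k - xh k - lam)
           * (sinh (xh k - xht (k - 1) + lam) / sinh (xh k - xht (k - 1) - lam))
       \<and> sinh (xht k - xh k + lam) / sinh (xht k - xh k - lam)
           * (sinh (xh (k + 1) - xht k + lam) / sinh (xh (k + 1) - xht k - lam))
         = sinh (xht k - xt k + mu) / sinh (xht k - xt k - mu)
           * (sinh (xt (k + 1) - xht k + mu) / sinh (xt (k + 1) - xht k - mu))))"
  proof -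
  note key = sinh_ratio
  have ndk: "nondeg l (p - q) \<longleftrightarrow> ndg (exp(2*l)) (exp(2*p)) (exp(2*q))" for l p q :: complex
    unfolding nondeg_def ndg_def sp sm by simp
  have e4: "exp(4*l) = exp(2*l)^2" for l :: complex
    by (simp add: power2_eq_square exp_add[symmetric])
  have E': "rr (exp(2*lam)) (exp(2*xt k)) (exp(2*x k)) * rr (exp(2*lam)) (exp(2*x k)) (exp(2*xt (k-1)))
     = rr (exp(2*mu)) (exp(2*xh k)) (exp(2*x k)) * rr (exp(2*mu)) (exp(2*x k)) (exp(2*xh (k-1)))" for k
    using E[of k] by (simp only: key)
  have nd': "ndg (exp(2*lam)) (exp(2*xt k)) (exp(2*x k)) \<and> ndg (exp(2*lam)) (exp(2*x k)) (exp(2*xt (k-1)))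
     \<and> ndg (exp(2*mu)) (exp(2*xh k)) (exp(2*x k)) \<and> ndg (exp(2*mu)) (exp(2*x k)) (exp(2*xh (k-1)))
     \<and> ndg (exp(2*lam)) (exp(2*x (k+1))) (exp(2*xt k)) \<and> ndg (exp(2*mu)) (exp(2*x (k+1))) (exp(2*xh k))
     \<and> ndg (exp(2*mu)) (exp(2*xht k)) (exp(2*xt k)) \<and> ndg (exp(2*mu)) (exp(2*xt k)) (exp(2*xht (k-1)))
     \<and> ndg (exp(2*lam)) (exp(2*xht k)) (exp(2*xh k)) \<and> ndg (exp(2*lam)) (exp(2*xh k)) (exp(2*xht (k-1)))
     \<and> ndg (exp(2*lam)) (exp(2*xh (k+1))) (exp(2*xht k)) \<and> ndg (exp(2*mu)) (exp(2*xt (k+1))) (exp(2*xht k))" for k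
    using nd[of k] by (simp only: ndk)
  have d1': "(exp(2*lam)^2-exp(2*mu)^2)*exp(2*x(k+1)) + exp(2*mu)*(1-exp(2*lam)^2)*exp(2*xh k)
     + exp(2*lam)*(exp(2*mu)^2-1)*exp(2*xt k) \<noteq> 0" for k
    using def1[of k] unfolding e4 .
  have d2': "(exp(2*lam)^2-exp(2*mu)^2)*exp(2*x(k+1)) + exp(2*mu)*(1-exp(2*lam)^2)*exp(2*xh (k+1))
     + exp(2*lam)*(exp(2*mu)^2-1)*exp(2*xt (k+1)) \<noteq> 0" for k
    using def2[of k] unfolding e4 .
  have S1': "S1 k \<longleftrightarrow> SS (exp(2*lam)) (exp(2*mu)) (exp(2*x(k+1))) (exp(2*xt k)) (exp(2*xh k)) (exp(2*xht k)) = 0" for k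
    unfolding S1_def SS_def e4 by (rule refl)
  have S2': "S2 k \<longleftrightarrow> SS (exp(2*lam)) (exp(2*mu)) (exp(2*x(k+1))) (exp(2*xt (k+1))) (exp(2*xh (k+1))) (exp(2*xht k)) = 0" for k
    unfolding S2_def SS_def e4 by (rule refl)
  note C = core[of "exp(2*lam)" "exp(2*mu)" "\<lambda>k. exp(2*x k)" "\<lambda>k. exp(2*xt k)" "\<lambda>k. exp(2*xh k)" "\<lambda>k. exp(2*xht k)"]
  note C2 = C[OF _ _ _ _ _ _ E' nd' d1' d2']
  show ?thesis unfolding key S1' S2' using C2 by simp
qed

end
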